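(* Let $L|K$ be a field extension and assume that $L$ admits a $K$-rational place $\xi$. Then the map $\iota:M(K)\to M(L)$, $\zeta\mapsto\zeta\circ\xi$, is a continuous injective map compatible with restriction.
   Context: A $K$-rational place of $L$ is a place of $L$ which is the identity on $K$ and whose image is $K\cup\{\infty\}$. For a field $K$, $M(K)$ is the set of $\mathbb R$-places $K\to\mathbb R\cup\{\infty\}$, with topology generated by the subbasis $H'(b)=\{\zeta\in M(K)\mid \infty\ne\zeta(b)>0\}$, $b\in K$. A map $\iota:M(K)\to M(L)$ is compatible with restriction if $\iota(\zeta)|_K=\zeta$ for all $\zeta\in M(K)$. *)

theory Defs
  imports "HOL-Analysis.Analysis"
begin

definition is_subfield :: "'a::field set \<Rightarrow> bool" where
  "is_subfield K \<longleftrightarrow> 0 \<in> K \<and> 1 \<in> K \<and>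
     (\<forall>x\<in>K. \<forall>y\<in>K. x + y \<in> K \<and> x * y \<in> K) \<and>
     (\<forall>x\<in>K. - x \<in> K \<and> inverse x \<in> K)"

text \<open>The value infinity is represented by None, a finite value y by Some y.
  A place of the field A into the field B is a map phi on A with values in B \<union> {\<infinity>}
  whose finiteness ring O = {x. phi x \<noteq> \<infinity>} is a subring on which phi is a ring
  homomorphism, and such that for x \<noteq> 0: phi x = \<infinity> iff phi (x^-1) = 0
  (so O is a valuation ring and the kernel of phi on O is its maximal ideal).\<close>
definition is_place :: "'a::field set \<Rightarrow> 'b::field set \<Rightarrow> ('a \<Rightarrow> 'b option) \<Rightarrow> bool" where
  "is_place A B \<phi> \<longleftrightarrow>
     (\<forall>x. x \<notin> A \<longrightarrow> \<phi> x = None) \<and>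
     (\<forall>x\<in>A. \<forall>y. \<phi> x = Some y \<longrightarrow> y \<in> B) \<and>
     \<phi> 1 = Some 1 \<and>
     (\<forall>x\<in>A. \<forall>y\<in>A. \<forall>a b. \<phi> x = Some a \<and> \<phi> y = Some b \<longrightarrow>
         \<phi> (x + y) = Some (a + b) \<and> \<phi> (x * y) = Some (a * b)) \<and>
     (\<forall>x\<in>A. x \<noteq> 0 \<longrightarrow> (\<phi> x = None \<longleftrightarrow> \<phi> (inverse x) = Some 0))"

definition K_rational_place :: "'a::field set \<Rightarrow> 'a set \<Rightarrow> ('a \<Rightarrow> 'a option) \<Rightarrow> bool" where
  "K_rational_place K L \<xi> \<longleftrightarrow> is_place L K \<xi> \<and> (\<forall>x\<in>K. \<xi> x = Some x)"

definition Mspace :: "'a::field set \<Rightarrow> ('a \<Rightarrow> real option) set" where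
  "Mspace K = {\<zeta>. is_place K (UNIV::real set) \<zeta>}"

definition Hsub :: "'a::field set \<Rightarrow> 'a \<Rightarrow> ('a \<Rightarrow> real option) set" where
  "Hsub K b = {\<zeta>\<in>Mspace K. \<exists>r. \<zeta> b = Some r \<and> r > 0}"

definition Mtop :: "'a::field set \<Rightarrow> ('a \<Rightarrow> real option) topology" where
  "Mtop K = subtopology (topology_generated_by {Hsub K b | b. b \<in> K}) (Mspace K)"

definition place_comp :: "('b \<Rightarrow> 'c option) \<Rightarrow> ('a \<Rightarrow> 'b option) \<Rightarrow> 'a \<Rightarrow> 'c option" where
  "place_comp \<zeta> \<xi> x = (case \<xi> x of None \<Rightarrow> None | Some y \<Rightarrow> \<zeta> y)"

definition place_restrict :: "'a set \<Rightarrow> ('a \<Rightarrow> 'c option) \<Rightarrow> 'a \<Rightarrow> 'c option" where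
  "place_restrict K \<zeta> x = (if x \<in> K then \<zeta> x else None)"

end

theory Submission
  imports Defs
begin

lemma is_placeD:
  assumes "is_place A B \<phi>"
  shows is_place_out: "\<And>x. x \<notin> A \<Longrightarrow> \<phi> x = None"
    and is_place_val: "\<And>x y. x\<in>A \<Longrightarrow> \<phi> x = Some y \<Longrightarrow> y \<in> B"
    and is_place_one: "\<phi> 1 = Some 1"
    and is_place_add: "\<And>x y a b. x\<in>A \<Longrightarrow> y\<in>A \<Longrightarrow> \<phi> x = Some a \<Longrightarrow> \<phi> y = Some b \<Longrightarrow> \<phi> (x + y) = Some (a + b)"
    and is_place_mult: "\<And>x y a b. x\<in>A \<Longrightarrow> y\<in>A \<Longrightarrow> \<phi> x = Some a \<Longrightarrow> \<phi> y = Some b \<Longrightarrow> \<phi> (x * y) = Some (a * b)"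
    and is_place_inv: "\<And>x. x\<in>A \<Longrightarrow> x \<noteq> 0 \<Longrightarrow> (\<phi> x = None \<longleftrightarrow> \<phi> (inverse x) = Some 0)"
proof -
  have h1: "\<forall>x. x \<notin> A \<longrightarrow> \<phi> x = None" and h2: "\<forall>x\<in>A. \<forall>y. \<phi> x = Some y \<longrightarrow> y \<in> B"
    and h3: "\<phi> 1 = Some 1"
    and h4: "\<forall>x\<in>A. \<forall>y\<in>A. \<forall>a b. \<phi> x = Some a \<and> \<phi> y = Some b \<longrightarrow>
         \<phi> (x + y) = Some (a + b) \<and> \<phi> (x * y) = Some (a * b)"
    and h5: "\<forall>x\<in>A. x \<noteq> 0 \<longrightarrow> (\<phi> x = None \<longleftrightarrow> \<phi> (inverse x) = Some 0)"
    using assms unfolding is_place_def by simp_all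
  show "\<And>x. x \<notin> A \<Longrightarrow> \<phi> x = None" using h1 by simp
  show "\<And>x y. x\<in>A \<Longrightarrow> \<phi> x = Some y \<Longrightarrow> y \<in> B" using h2 by simp
  show "\<phi> 1 = Some 1" by (fact h3)
  show "\<And>x y a b. x\<in>A \<Longrightarrow> y\<in>A \<Longrightarrow> \<phi> x = Some a \<Longrightarrow> \<phi> y = Some b \<Longrightarrow> \<phi> (x + y) = Some (a + b)"
    using h4 by simp
  show "\<And>x y a b. x\<in>A \<Longrightarrow> y\<in>A \<Longrightarrow> \<phi> x = Some a \<Longrightarrow> \<phi> y = Some b \<Longrightarrow> \<phi> (x * y) = Some (a * b)"
    using h4 by simp
  show "\<And>x. x\<in>A \<Longrightarrow> x \<noteq> 0 \<Longrightarrow> (\<phi> x = None \<longleftrightarrow> \<phi> (inverse x) = Some 0)" using h5 by simp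
qed

lemma place_zero:
  assumes F: "is_subfield A" and P: "is_place A B \<phi>"
  shows "\<phi> 0 = Some 0"
proof -
  have m1: "-1 \<in> A" "(1::'a) \<in> A" "(0::'a) \<in> A" using F unfolding is_subfield_def by auto
  have ne: "-1 \<noteq> (0::'a)" by simp
  have inv: "inverse (-1::'a) = -1" by simp
  have "\<phi> (-1) \<noteq> None"
  proof
    assume h: "\<phi> (-1) = None"
    then have "\<phi> (inverse (-1)) = Some 0" using is_place_inv[OF P] m1 ne by blast
    with h inv show False by simp
  qed
  then obtain a where a: "\<phi> (-1) = Some a" by auto
  have o: "\<phi> 1 = Some 1" using is_place_one[OF P] .
  have "\<phi> (1 + -1) = Some (1 + a)" using is_place_add[OF P] m1 a o by blast
  then have z: "\<phi> 0 = Some (1 + a)" by simp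
  have "\<phi> (0 + 0) = Some ((1+a) + (1+a))" using is_place_add[OF P] m1 z by blast
  with z have "1 + a = (1+a) + (1+a)" by simp
  then have "1 + a = 0" by (simp add: add.commute)
  with z show ?thesis by simp
qed

lemma comp_place:
  assumes FK: "is_subfield K" and FL: "is_subfield L" and KL: "K \<subseteq> L"
    and X: "K_rational_place K L \<xi>" and Z: "\<zeta> \<in> Mspace K"
  shows "place_comp \<zeta> \<xi> \<in> Mspace L"
proof -
  have PX: "is_place L K \<xi>" and XK: "\<forall>x\<in>K. \<xi> x = Some x"
    using X unfolding K_rational_place_def by auto
  have PZ: "is_place K UNIV \<zeta>" using Z unfolding Mspace_def by auto
  have x0: "\<xi> 0 = Some 0" using place_zero[OF FL PX] .
  have z0: "\<zeta> 0 = Some 0" using place_zero[OF FK PZ] .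
  have xval: "\<And>x c. x \<in> L \<Longrightarrow> \<xi> x = Some c \<Longrightarrow> c \<in> K" using is_place_val[OF PX] by blast
  have xout: "\<And>x. x \<notin> L \<Longrightarrow> \<xi> x = None" using is_place_out[OF PX] by blast
  have x1: "\<xi> 1 = Some 1" using is_place_one[OF PX] .
  have z1: "\<zeta> 1 = Some 1" using is_place_one[OF PZ] .
  have xadd: "\<And>x y a b. x\<in>L \<Longrightarrow> y\<in>L \<Longrightarrow> \<xi> x = Some a \<Longrightarrow> \<xi> y = Some b \<Longrightarrow>
         \<xi> (x + y) = Some (a + b) \<and> \<xi> (x * y) = Some (a * b)" using is_place_add[OF PX] is_place_mult[OF PX] by blast
  have zadd: "\<And>x y a b. x\<in>K \<Longrightarrow> y\<in>K \<Longrightarrow> \<zeta> x = Some a \<Longrightarrow> \<zeta> y = Some b \<Longrightarrow>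
         \<zeta> (x + y) = Some (a + b) \<and> \<zeta> (x * y) = Some (a * b)" using is_place_add[OF PZ] is_place_mult[OF PZ] by blast
  have xinv: "\<And>x. x\<in>L \<Longrightarrow> x \<noteq> 0 \<Longrightarrow> (\<xi> x = None \<longleftrightarrow> \<xi> (inverse x) = Some 0)"
    using is_place_inv[OF PX] by blast
  have zinv: "\<And>x. x\<in>K \<Longrightarrow> x \<noteq> 0 \<Longrightarrow> (\<zeta> x = None \<longleftrightarrow> \<zeta> (inverse x) = Some 0)"
    using is_place_inv[OF PZ] by blast
  have Linv: "\<And>x. x \<in> L \<Longrightarrow> inverse x \<in> L" using FL unfolding is_subfield_def by blast
  have Kinv: "\<And>x. x \<in> K \<Longrightarrow> inverse x \<in> K" using FK unfolding is_subfield_def by blast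
  let ?p = "place_comp \<zeta> \<xi>"
  have c1: "\<forall>x. x \<notin> L \<longrightarrow> ?p x = None" using xout by (simp add: place_comp_def)
  have c2: "?p 1 = Some 1" using x1 z1 by (simp add: place_comp_def)
  have c3: "\<forall>x\<in>L. \<forall>y\<in>L. \<forall>a b. ?p x = Some a \<and> ?p y = Some b \<longrightarrow>
         ?p (x + y) = Some (a + b) \<and> ?p (x * y) = Some (a * b)"
  proof (intro ballI allI impI)
    fix x y a b assume xy: "x \<in> L" "y \<in> L" and h: "?p x = Some a \<and> ?p y = Some b"
    then obtain c d where c: "\<xi> x = Some c" "\<zeta> c = Some a" and d: "\<xi> y = Some d" "\<zeta> d = Some b"
      by (auto simp: place_comp_def split: option.splits)
    have cK: "c \<in> K" "d \<in> K" using xval xy c d by auto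
    show "?p (x + y) = Some (a + b) \<and> ?p (x * y) = Some (a * b)"
      using xadd[OF xy c(1) d(1)] zadd[OF cK c(2) d(2)] by (simp add: place_comp_def)
  qed
  have c4: "\<forall>x\<in>L. x \<noteq> 0 \<longrightarrow> (?p x = None \<longleftrightarrow> ?p (inverse x) = Some 0)"
  proof (intro ballI impI)
    fix x assume xL: "x \<in> L" and nz: "x \<noteq> 0"
    have iL: "inverse x \<in> L" using Linv xL .
    have inz: "inverse x \<noteq> 0" using nz by simp
    show "?p x = None \<longleftrightarrow> ?p (inverse x) = Some 0"
    proof (cases "\<xi> x")
      case None
      then have "\<xi> (inverse x) = Some 0" using xinv xL nz by blast
      with None z0 show ?thesis by (simp add: place_comp_def)
    next
      case (Some c)
      have cK: "c \<in> K" using xval xL Some by blast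
      show ?thesis
      proof (cases "c = 0")
        case True
        have "\<xi> (inverse x) = None" using xinv[OF iL inz] Some True by simp
        then show ?thesis using Some True z0 by (simp add: place_comp_def)
      next
        case False
        have "\<xi> (inverse x) \<noteq> None" using xinv[OF iL inz] Some False by simp
        then obtain d where d: "\<xi> (inverse x) = Some d" by auto
        have "\<xi> (x * inverse x) = Some (c * d)" using xadd[OF xL iL Some d] by blast
        with nz x1 have "c * d = 1" by simp
        then have dc: "d = inverse c" using False by (simp add: field_simps)
        show ?thesis using Some d dc zinv[OF cK False] by (simp add: place_comp_def)
      qed
    qed
  qed
  have "is_place L UNIV ?p" unfolding is_place_def
    by (intro conjI c1 c2 c3 c4) simp
  then show ?thesis unfolding Mspace_def by simp
qed

theorem theorem9p1:
  fixes K L :: "'a::field set" and \<xi> :: "'a \<Rightarrow> 'a option"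
  assumes "is_subfield K" and "is_subfield L" and "K \<subseteq> L"
    and "K_rational_place K L \<xi>"
  defines "\<iota> \<equiv> (\<lambda>\<zeta>. place_comp \<zeta> \<xi>)"
  shows "continuous_map (Mtop K) (Mtop L) \<iota> \<and> inj_on \<iota> (Mspace K) \<and>
         (\<forall>\<zeta>\<in>Mspace K. place_restrict K (\<iota> \<zeta>) = \<zeta>)"
proof -
  have PX: "is_place L K \<xi>" and XK: "\<forall>x\<in>K. \<xi> x = Some x"
    using assms(4) unfolding K_rational_place_def by auto
  have restr: "\<forall>\<zeta>\<in>Mspace K. place_restrict K (\<iota> \<zeta>) = \<zeta>"
  proof
    fix \<zeta> assume "\<zeta> \<in> Mspace K"
    then have "\<forall>x. x \<notin> K \<longrightarrow> \<zeta> x = None" unfolding Mspace_def using is_place_out by blast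
    then show "place_restrict K (\<iota> \<zeta>) = \<zeta>"
      using XK by (auto simp: fun_eq_iff place_restrict_def \<iota>_def place_comp_def)
  qed
  have inj: "inj_on \<iota> (Mspace K)"
    by (metis inj_onI restr)
  have map: "\<And>\<zeta>. \<zeta> \<in> Mspace K \<Longrightarrow> \<iota> \<zeta> \<in> Mspace L"
    unfolding \<iota>_def using comp_place[OF assms(1-4)] by blast
  have cov: "\<And>A::'a set. is_subfield A \<Longrightarrow> \<Union>{Hsub A b | b. b \<in> A} = Mspace A"
  proof -
    fix A :: "'a set" assume F: "is_subfield A"
    have "Hsub A 1 = Mspace A"
      unfolding Hsub_def Mspace_def using is_place_one by fastforce
    moreover have "1 \<in> A" using F unfolding is_subfield_def by auto
    ultimately show "\<Union>{Hsub A b | b. b \<in> A} = Mspace A"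
      unfolding Hsub_def by auto
  qed
  have top: "\<And>A::'a set. is_subfield A \<Longrightarrow> topspace (Mtop A) = Mspace A"
    unfolding Mtop_def using cov by simp
  have cont0: "continuous_map (Mtop K) (topology_generated_by {Hsub L b | b. b \<in> L}) \<iota>"
  proof (rule continuous_on_generated_topo)
    fix U assume "U \<in> {Hsub L b | b. b \<in> L}"
    then obtain b where bL: "b \<in> L" and U: "U = Hsub L b" by auto
    show "openin (Mtop K) (\<iota> -` U \<inter> topspace (Mtop K))"
    proof (cases "\<xi> b")
      case None
      then have "\<iota> -` U \<inter> topspace (Mtop K) = {}"
        by (auto simp: U Hsub_def \<iota>_def place_comp_def)
      then show ?thesis by simp
    next
      case (Some c)
      have cK: "c \<in> K" using is_place_val[OF PX] bL Some by blast
      have "\<iota> -` U \<inter> topspace (Mtop K) = Hsub K c \<inter> Mspace K"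
        using map by (auto simp: top[OF assms(1)] U Hsub_def \<iota>_def place_comp_def Some)
      moreover have "openin (topology_generated_by {Hsub K b | b. b \<in> K}) (Hsub K c)"
        by (rule topology_generated_by_Basis) (use cK in auto)
      ultimately show ?thesis unfolding Mtop_def by (auto simp: openin_subtopology)
    qed
  next
    show "\<iota> ` topspace (Mtop K) \<subseteq> \<Union> {Hsub L b | b. b \<in> L}"
      using map top[OF assms(1)] cov[OF assms(2)] by blast
  qed
  have "continuous_map (Mtop K) (Mtop L) \<iota>"
    unfolding Mtop_def[of L]
    by (rule continuous_map_into_subtopology[OF cont0])
       (use map top[OF assms(1)] in auto)
  with inj restr show ?thesis by blast
qed

end
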